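(* Let $B$ be a compact oriented $3$-manifold, $L\subset B$ a compact $1$-dimensional submanifold, and $\mathcal{V}_\chi$ an orthogonal flat affine orbifold bundle over $(B,L)$ with fibre a real vector space $V$ with quadratic form of signature $(3,q)$, whose orbifold involutions are reflections in vectors of square $-2$. If $\mathcal{V}_\chi$ admits a maximal positive section $h$, then the Riemannian metric on $B\setminus L$ induced by $h$ has non-negative Ricci curvature.
   Context: $B$ is regarded as an orbifold modelled near $L$ on $(\mathbb{R}\times\mathbb{C})/\sigma$, $\sigma(t,z)=(t,-z)$. The bundle is given by charts $U_\alpha$ with trivialisations $U_\alpha\times V$ away from $L$, and near $L$ by $\tilde U_\alpha/\sigma$ together with affine involutions $\tau_\alpha(v)=v+(\delta_\alpha,v)\delta_\alpha+\lambda_\alpha\delta_\alpha$, $(\delta_\alpha,\delta_\alpha)=-2$; transitions are locally constant affine isometries. A section is given locally by smooth maps $f_\alpha$ into $V$ ($\sigma$-equivariant: $f_\alpha(\sigma x)=\tau_\alpha(f_\alpha(x))$ near $L$). It is positive if away from $L$ each $f_\alpha$ is an immersion whose tangent spaces are positive definite $3$-dimensional subspaces, and near each point $x_0$ of the fixed line of $\sigma$: $Df_\alpha(x_0)$ vanishes on $\mathbb{C}$ with image spanned by $v_0$, $D^2f_\alpha(x_0)|_{\mathbb{C}}=v_1\mathrm{Re}z^2+v_2\mathrm{Im}z^2$, and $v_0,v_1,v_2$ span a maximal positive subspace of $\delta_\alpha^\perp$. It is maximal positive if, in addition, away from $L$ the local images $f_\alpha(U_\alpha)$ are maximal submanifolds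 (zero mean curvature for the induced metric). The induced metric on $B\setminus L$ is the pullback of the quadratic form of $V$ by $df_\alpha$. *)

theory Defs imports "HOL-Analysis.Analysis" begin

definition pd :: "'i::finite \<Rightarrow> (real^'i \<Rightarrow> 'b::real_normed_vector) \<Rightarrow> real^'i \<Rightarrow> 'b" where
  "pd i g = (\<lambda>x. frechet_derivative g (at x) (axis i 1))"

definition iter_pd :: "'i::finite list \<Rightarrow> (real^'i \<Rightarrow> 'b::real_normed_vector) \<Rightarrow> real^'i \<Rightarrow> 'b" where
  "iter_pd is g = foldr pd is g"

definition smooth_on :: "(real^'i::finite) set \<Rightarrow> (real^'i \<Rightarrow> 'b::real_normed_vector) \<Rightarrow> bool" where
  "smooth_on U g \<longleftrightarrow> (\<forall>is. \<forall>x\<in>U. iter_pd is g differentiable (at x))"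

definition pos_def_on :: "('v \<Rightarrow> 'v \<Rightarrow> real) \<Rightarrow> 'v::real_vector set \<Rightarrow> bool" where
  "pos_def_on Q S \<longleftrightarrow> (\<forall>x\<in>S. x \<noteq> 0 \<longrightarrow> Q x x > 0)"

definition signature_form :: "('v::euclidean_space \<Rightarrow> 'v \<Rightarrow> real) \<Rightarrow> nat \<Rightarrow> nat \<Rightarrow> bool" where
  "signature_form Q p q \<longleftrightarrow>
     bilinear Q \<and> (\<forall>x y. Q x y = Q y x) \<and> (\<forall>x. (\<forall>y. Q x y = 0) \<longrightarrow> x = 0) \<and>
     (\<exists>S. subspace S \<and> dim S = p \<and> pos_def_on Q S) \<and>
     (\<forall>S. subspace S \<and> pos_def_on Q S \<longrightarrow> dim S \<le> p) \<and>
     DIM('v) = p + q"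

definition tangent :: "(real^'i::finite \<Rightarrow> 'v::real_normed_vector) \<Rightarrow> real^'i \<Rightarrow> real^'i \<Rightarrow> 'v" where
  "tangent f x v = (\<Sum>i\<in>UNIV. v $ i *\<^sub>R pd i f x)"

definition positive_immersion_on :: "('v \<Rightarrow> 'v \<Rightarrow> real) \<Rightarrow> (real^'i::finite) set \<Rightarrow> (real^'i \<Rightarrow> 'v::real_normed_vector) \<Rightarrow> bool" where
  "positive_immersion_on Q U f \<longleftrightarrow>
     (\<forall>x\<in>U. f differentiable (at x) \<and> (\<forall>v. v \<noteq> 0 \<longrightarrow> Q (tangent f x v) (tangent f x v) > 0))"

definition ind_metric :: "('v \<Rightarrow> 'v \<Rightarrow> real) \<Rightarrow> (real^'i::finite \<Rightarrow> 'v::real_normed_vector) \<Rightarrow> real^'i \<Rightarrow> real^'i^'i" where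
  "ind_metric Q f x = (\<chi> i j. Q (pd i f x) (pd j f x))"

definition ginv :: "('v \<Rightarrow> 'v \<Rightarrow> real) \<Rightarrow> (real^'i::finite \<Rightarrow> 'v::real_normed_vector) \<Rightarrow> real^'i \<Rightarrow> real^'i^'i" where
  "ginv Q f x = matrix_inv (ind_metric Q f x)"

definition normal_part :: "('v \<Rightarrow> 'v \<Rightarrow> real) \<Rightarrow> (real^'i::finite \<Rightarrow> 'v::real_normed_vector) \<Rightarrow> real^'i \<Rightarrow> 'v \<Rightarrow> 'v" where
  "normal_part Q f x w =
     w - (\<Sum>k\<in>UNIV. \<Sum>l\<in>UNIV. (ginv Q f x $ k $ l * Q w (pd l f x)) *\<^sub>R pd k f x)"

definition mean_curv :: "('v \<Rightarrow> 'v \<Rightarrow> real) \<Rightarrow> (real^'i::finite \<Rightarrow> 'v::real_normed_vector) \<Rightarrow> real^'i \<Rightarrow> 'v" where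
  "mean_curv Q f x =
     (\<Sum>i\<in>UNIV. \<Sum>j\<in>UNIV. ginv Q f x $ i $ j *\<^sub>R normal_part Q f x (pd i (pd j f) x))"

definition maximal_on :: "('v \<Rightarrow> 'v \<Rightarrow> real) \<Rightarrow> (real^'i::finite) set \<Rightarrow> (real^'i \<Rightarrow> 'v::real_normed_vector) \<Rightarrow> bool" where
  "maximal_on Q U f \<longleftrightarrow> (\<forall>x\<in>U. mean_curv Q f x = 0)"

definition christoffel :: "('v \<Rightarrow> 'v \<Rightarrow> real) \<Rightarrow> (real^'i::finite \<Rightarrow> 'v::real_normed_vector) \<Rightarrow> 'i \<Rightarrow> 'i \<Rightarrow> 'i \<Rightarrow> real^'i \<Rightarrow> real" where
  "christoffel Q f k i j x =
     1/2 * (\<Sum>l\<in>UNIV. ginv Q f x $ k $ l *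
        (pd i (\<lambda>y. ind_metric Q f y $ j $ l) x + pd j (\<lambda>y. ind_metric Q f y $ i $ l) x
         - pd l (\<lambda>y. ind_metric Q f y $ i $ j) x))"

text \<open>Riemann tensor R(d_i,d_j)d_k = R^l_ijk d_l, with R(X,Y)Z = nabla_X nabla_Y Z - nabla_Y nabla_X Z - nabla_[X,Y] Z.\<close>
definition riemann :: "('v \<Rightarrow> 'v \<Rightarrow> real) \<Rightarrow> (real^'i::finite \<Rightarrow> 'v::real_normed_vector) \<Rightarrow> 'i \<Rightarrow> 'i \<Rightarrow> 'i \<Rightarrow> 'i \<Rightarrow> real^'i \<Rightarrow> real" where
  "riemann Q f l i j k x =
     pd i (\<lambda>y. christoffel Q f l j k y) x - pd j (\<lambda>y. christoffel Q f l i k y) x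
     + (\<Sum>m\<in>UNIV. christoffel Q f l i m x * christoffel Q f m j k x
                 - christoffel Q f l j m x * christoffel Q f m i k x)"

definition ricci :: "('v \<Rightarrow> 'v \<Rightarrow> real) \<Rightarrow> (real^'i::finite \<Rightarrow> 'v::real_normed_vector) \<Rightarrow> 'i \<Rightarrow> 'i \<Rightarrow> real^'i \<Rightarrow> real" where
  "ricci Q f j k x = (\<Sum>i\<in>UNIV. riemann Q f i i j k x)"

definition nonneg_ricci_on :: "('v \<Rightarrow> 'v \<Rightarrow> real) \<Rightarrow> (real^'i::finite) set \<Rightarrow> (real^'i \<Rightarrow> 'v::real_normed_vector) \<Rightarrow> bool" where
  "nonneg_ricci_on Q U f \<longleftrightarrow>
     (\<forall>x\<in>U. \<forall>v::real^'i. 0 \<le> (\<Sum>j\<in>UNIV. \<Sum>k\<in>UNIV. ricci Q f j k x * v $ j * v $ k))"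

end

theory Submission
  imports Defs "HOL-Analysis.Analysis"
begin


lemma pd_hasD: "(h has_derivative D) (at x) \<Longrightarrow> pd i h x = D (axis i 1)"
  unfolding pd_def using frechet_derivative_at by metis

lemma pd_local:
  assumes "open U" "x \<in> U" "\<And>y. y \<in> U \<Longrightarrow> h y = k y"
  shows "pd i h x = pd i k x"
proof -
  have "\<And>D. (h has_derivative D) (at x) \<longleftrightarrow> (k has_derivative D) (at x)"
    using has_derivative_transform_within_open[OF _ assms(1,2)] assms(3) by metis
  then have "frechet_derivative h (at x) = frechet_derivative k (at x)"
    unfolding frechet_derivative_def by simp
  then show ?thesis unfolding pd_def by simp
qed

lemma diff_local:
  assumes "open U" "x \<in> U" "\<And>y. y \<in> U \<Longrightarrow> h y = k y" "k differentiable (at x)"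
  shows "h differentiable (at x)"
proof -
  obtain D where "(k has_derivative D) (at x)" using assms(4) unfolding differentiable_def by blast
  then have "(h has_derivative D) (at x)"
    by (rule has_derivative_transform_within_open[OF _ assms(1,2)]) (simp add: assms(3))
  then show ?thesis unfolding differentiable_def by blast
qed

lemma dist_add_self: "dist x (x + v) = norm (v::'a::real_normed_vector)"
proof -
  have "dist x (x+v) = dist (x+v) x" by (rule dist_commute)
  also have "\<dots> = norm v" by (simp add: dist_norm)
  finally show ?thesis .
qed

lemma line_deriv:
  assumes "(h has_derivative D) (at (p + s *\<^sub>R e))"
  shows "((\<lambda>s. h (p + s *\<^sub>R e)) has_real_derivative D e) (at s)"
proof -
  have l: "((\<lambda>s. p + s *\<^sub>R e) has_derivative (\<lambda>s. s *\<^sub>R e)) (at s)"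
    by (auto intro!: derivative_eq_intros)
  have "((\<lambda>s. h (p + s *\<^sub>R e)) has_derivative (\<lambda>s. D (s *\<^sub>R e))) (at s)"
    using has_derivative_compose[OF l assms] .
  moreover have "(\<lambda>s. D (s *\<^sub>R e)) = (\<lambda>s. D e * s)"
    using has_derivative_linear[OF assms] by (auto simp: linear_scale)
  ultimately show ?thesis by (simp add: has_field_derivative_def)
qed

lemma line_deriv_pd:
  assumes "h differentiable (at (p + s *\<^sub>R axis i 1))"
  shows "((\<lambda>s. h (p + s *\<^sub>R axis i 1)) has_real_derivative pd i h (p + s *\<^sub>R axis i 1)) (at s)"
  using line_deriv[OF frechet_derivative_works[THEN iffD1, OF assms]] unfolding pd_def .

lemma delta_mvt:
  fixes h :: "real^'n \<Rightarrow> real"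
  assumes sub: "ball x r \<subseteq> U"
    and dh: "\<And>y. y \<in> U \<Longrightarrow> h differentiable (at y)"
    and dhi: "\<And>y. y \<in> U \<Longrightarrow> pd i h differentiable (at y)"
    and t: "0 < t" "2 * t < r"
  shows "\<exists>\<xi> \<eta>. 0 < \<xi> \<and> \<xi> < t \<and> 0 < \<eta> \<and> \<eta> < t \<and>
     h (x + t *\<^sub>R axis i 1 + t *\<^sub>R axis j 1) - h (x + t *\<^sub>R axis i 1) - h (x + t *\<^sub>R axis j 1) + h x
       = t * t * pd j (pd i h) (x + \<xi> *\<^sub>R axis i 1 + \<eta> *\<^sub>R axis j 1)"
proof -
  have inU: "x + s *\<^sub>R axis i 1 + u *\<^sub>R axis j 1 \<in> U" if "0 \<le> s" "s \<le> t" "0 \<le> u" "u \<le> t" for s u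
  proof -
    have "norm (s *\<^sub>R axis i (1::real) + u *\<^sub>R axis j 1) \<le> norm (s *\<^sub>R axis i (1::real)) + norm (u *\<^sub>R axis j (1::real))"
      by (rule norm_triangle_ineq)
    also have "\<dots> = s + u" using that by simp
    finally have n: "norm (s *\<^sub>R axis i (1::real) + u *\<^sub>R axis j 1) < r" using that t by simp
    have "dist x (x + s *\<^sub>R axis i 1 + u *\<^sub>R axis j 1) = norm (s *\<^sub>R axis i (1::real) + u *\<^sub>R axis j 1)"
      using dist_add_self[of x] by (simp add: add.assoc)
    then show ?thesis using n sub by auto
  qed
  define \<phi> where "\<phi> s = h (x + t *\<^sub>R axis j 1 + s *\<^sub>R axis i 1) - h (x + s *\<^sub>R axis i 1)" for s
  have d\<phi>: "(\<phi> has_real_derivative (pd i h (x + t *\<^sub>R axis j 1 + s *\<^sub>R axis i 1) - pd i h (x + s *\<^sub>R axis i 1))) (at s)"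
    if "0 \<le> s" "s \<le> t" for s
  proof -
    have a: "x + t *\<^sub>R axis j 1 + s *\<^sub>R axis i 1 \<in> U" using inU[of s t] that t by (simp add: algebra_simps)
    have b: "x + s *\<^sub>R axis i 1 \<in> U" using inU[of s 0] that t by simp
    show ?thesis unfolding \<phi>_def
      by (intro derivative_intros line_deriv_pd dh a b)
  qed
  have "continuous_on {0..t} \<phi>"
    using d\<phi> by (auto intro!: continuous_at_imp_continuous_on DERIV_isCont)
  then obtain l \<xi> where \<xi>: "0 < \<xi>" "\<xi> < t" "DERIV \<phi> \<xi> :> l" "\<phi> t - \<phi> 0 = (t - 0) * l"
    using MVT[OF t(1), of \<phi>] d\<phi> real_differentiable_def less_eq_real_def by blast
  have l: "l = pd i h (x + t *\<^sub>R axis j 1 + \<xi> *\<^sub>R axis i 1) - pd i h (x + \<xi> *\<^sub>R axis i 1)"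
    using DERIV_unique[OF \<xi>(3) d\<phi>] \<xi> by simp
  define \<psi> where "\<psi> u = pd i h (x + \<xi> *\<^sub>R axis i 1 + u *\<^sub>R axis j 1)" for u
  have d\<psi>: "(\<psi> has_real_derivative pd j (pd i h) (x + \<xi> *\<^sub>R axis i 1 + u *\<^sub>R axis j 1)) (at u)"
    if "0 \<le> u" "u \<le> t" for u
    unfolding \<psi>_def using inU[of \<xi> u] that \<xi> by (intro line_deriv_pd dhi) auto
  have "continuous_on {0..t} \<psi>"
    using d\<psi> by (auto intro!: continuous_at_imp_continuous_on DERIV_isCont)
  then obtain m \<eta> where \<eta>: "0 < \<eta>" "\<eta> < t" "DERIV \<psi> \<eta> :> m" "\<psi> t - \<psi> 0 = (t - 0) * m"
    using MVT[OF t(1), of \<psi>] d\<psi> real_differentiable_def less_eq_real_def by blast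
  have m: "m = pd j (pd i h) (x + \<xi> *\<^sub>R axis i 1 + \<eta> *\<^sub>R axis j 1)"
    using DERIV_unique[OF \<eta>(3) d\<psi>] \<eta> by simp
  have "h (x + t *\<^sub>R axis i 1 + t *\<^sub>R axis j 1) - h (x + t *\<^sub>R axis i 1) - h (x + t *\<^sub>R axis j 1) + h x
      = \<phi> t - \<phi> 0" unfolding \<phi>_def by (simp add: algebra_simps)
  also have "\<dots> = t * (\<psi> t - \<psi> 0)" using \<xi>(4) l unfolding \<psi>_def by (simp add: algebra_simps)
  also have "\<dots> = t * t * pd j (pd i h) (x + \<xi> *\<^sub>R axis i 1 + \<eta> *\<^sub>R axis j 1)"
    using \<eta>(4) m by simp
  finally show ?thesis using \<xi> \<eta> by blast
qed

lemma abs_aux: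
  fixes p u w :: real
  assumes "\<bar>p - u\<bar> < \<bar>u - w\<bar> / 2" "\<bar>p - w\<bar> < \<bar>u - w\<bar> / 2"
  shows False
  using assms unfolding abs_less_iff by (cases "u \<le> w") (simp_all add: abs_if split: if_splits)

lemma clairaut_real:
  fixes h :: "real^'n \<Rightarrow> real"
  assumes U: "open U" "x \<in> U"
    and dh: "\<And>y. y \<in> U \<Longrightarrow> h differentiable (at y)"
    and dhi: "\<And>y. y \<in> U \<Longrightarrow> pd i h differentiable (at y)"
    and dhj: "\<And>y. y \<in> U \<Longrightarrow> pd j h differentiable (at y)"
    and c1: "isCont (pd j (pd i h)) x" and c2: "isCont (pd i (pd j h)) x"
  shows "pd j (pd i h) x = pd i (pd j h) x"
proof (rule ccontr)
  define A where "A = pd j (pd i h) x"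
  define B where "B = pd i (pd j h) x"
  assume "pd j (pd i h) x \<noteq> pd i (pd j h) x"
  then have d: "\<bar>A - B\<bar> / 2 > 0" unfolding A_def B_def by simp
  obtain r where r: "r > 0" "ball x r \<subseteq> U" using U open_contains_ball by blast
  obtain d1 where d1: "d1 > 0" "\<And>y. dist y x < d1 \<Longrightarrow> dist (pd j (pd i h) y) A < \<bar>A - B\<bar> / 2"
    using c1 d unfolding continuous_at_eps_delta A_def by blast
  obtain d2 where d2: "d2 > 0" "\<And>y. dist y x < d2 \<Longrightarrow> dist (pd i (pd j h) y) B < \<bar>A - B\<bar> / 2"
    using c2 d unfolding continuous_at_eps_delta B_def by blast
  define t where "t = min r (min d1 d2) / 4"
  have t: "0 < t" "2 * t < r" "2 * t < d1" "2 * t < d2" using r d1 d2 unfolding t_def by auto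
  obtain \<xi> \<eta> where p: "0 < \<xi>" "\<xi> < t" "0 < \<eta>" "\<eta> < t"
    "h (x + t *\<^sub>R axis i 1 + t *\<^sub>R axis j 1) - h (x + t *\<^sub>R axis i 1) - h (x + t *\<^sub>R axis j 1) + h x
       = t * t * pd j (pd i h) (x + \<xi> *\<^sub>R axis i 1 + \<eta> *\<^sub>R axis j 1)"
    using delta_mvt[OF r(2) dh dhi t(1,2)] by blast
  obtain \<xi>' \<eta>' where q: "0 < \<xi>'" "\<xi>' < t" "0 < \<eta>'" "\<eta>' < t"
    "h (x + t *\<^sub>R axis j 1 + t *\<^sub>R axis i 1) - h (x + t *\<^sub>R axis j 1) - h (x + t *\<^sub>R axis i 1) + h x
       = t * t * pd i (pd j h) (x + \<xi>' *\<^sub>R axis j 1 + \<eta>' *\<^sub>R axis i 1)"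
    using delta_mvt[OF r(2) dh dhj t(1,2)] by blast
  have nrm: "dist (x + a *\<^sub>R axis k 1 + b *\<^sub>R axis l 1) x < 2 * t"
    if "0 < a" "a < t" "0 < b" "b < t" for a b k l
  proof -
    have "norm (a *\<^sub>R axis k (1::real) + b *\<^sub>R axis l 1) \<le> norm (a *\<^sub>R axis k (1::real)) + norm (b *\<^sub>R axis l (1::real))"
      by (rule norm_triangle_ineq)
    also have "\<dots> = a + b" using that by simp
    finally have n: "norm (a *\<^sub>R axis k (1::real) + b *\<^sub>R axis l 1) < 2 * t" using that by simp
    have "dist x (x + a *\<^sub>R axis k 1 + b *\<^sub>R axis l 1) = norm (a *\<^sub>R axis k (1::real) + b *\<^sub>R axis l 1)"
      using dist_add_self[of x] by (simp add: add.assoc)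
    then show ?thesis using n by (simp add: dist_commute)
  qed
  have e1: "dist (pd j (pd i h) (x + \<xi> *\<^sub>R axis i 1 + \<eta> *\<^sub>R axis j 1)) A < \<bar>A - B\<bar> / 2"
    by (rule d1(2)) (use nrm[OF p(1-4), of i j] t in linarith)
  have e2: "dist (pd i (pd j h) (x + \<xi>' *\<^sub>R axis j 1 + \<eta>' *\<^sub>R axis i 1)) B < \<bar>A - B\<bar> / 2"
    by (rule d2(2)) (use nrm[OF q(1-4), of j i] t in linarith)
  have "t * t * pd j (pd i h) (x + \<xi> *\<^sub>R axis i 1 + \<eta> *\<^sub>R axis j 1)
      = t * t * pd i (pd j h) (x + \<xi>' *\<^sub>R axis j 1 + \<eta>' *\<^sub>R axis i 1)"
    using p(5) q(5) by (simp add: algebra_simps)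
  then have eq: "pd j (pd i h) (x + \<xi> *\<^sub>R axis i 1 + \<eta> *\<^sub>R axis j 1)
      = pd i (pd j h) (x + \<xi>' *\<^sub>R axis j 1 + \<eta>' *\<^sub>R axis i 1)" using t by simp
  show False using e1 e2 unfolding eq dist_real_def by (rule abs_aux)
qed


lemma clairaut:
  fixes h :: "real^'n \<Rightarrow> 'v::euclidean_space"
  assumes U: "open U" "x \<in> U"
    and dh: "\<And>y. y \<in> U \<Longrightarrow> h differentiable (at y)"
    and dhi: "\<And>y. y \<in> U \<Longrightarrow> pd i h differentiable (at y)"
    and dhj: "\<And>y. y \<in> U \<Longrightarrow> pd j h differentiable (at y)"
    and c1: "isCont (pd j (pd i h)) x" and c2: "isCont (pd i (pd j h)) x"
  shows "pd j (pd i h) x = pd i (pd j h) x"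
proof -
  have pdin: "pd k (\<lambda>y. g y \<bullet> b) y = pd k g y \<bullet> b" if dg: "g differentiable (at y)"
    for k and g :: "real^'n \<Rightarrow> 'v" and b y
  proof -
    obtain D where D: "(g has_derivative D) (at y)" using dg unfolding differentiable_def by blast
    have "((\<lambda>y. g y \<bullet> b) has_derivative (\<lambda>v. D v \<bullet> b)) (at y)"
      using has_derivative_inner_left[OF D] .
    then show ?thesis using pd_hasD[OF D] pd_hasD by metis
  qed
  have comp: "pd j (pd i h) x \<bullet> b = pd i (pd j h) x \<bullet> b" for b
  proof -
    define hb where "hb y = h y \<bullet> b" for y
    have e1: "pd i hb y = pd i h y \<bullet> b" "pd j hb y = pd j h y \<bullet> b" if "y \<in> U" for y
      unfolding hb_def using pdin dh that by auto
    have dd: "pd i hb differentiable (at y)" "pd j hb differentiable (at y)" if "y \<in> U" for y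
      by (rule diff_local[OF U(1) that e1(1)]; simp add: dhi that)
         (rule diff_local[OF U(1) that e1(2)]; simp add: dhj that)
    have e2: "pd j (pd i hb) y = pd j (pd i h) y \<bullet> b" "pd i (pd j hb) y = pd i (pd j h) y \<bullet> b" if "y \<in> U" for y
      using pd_local[where i=j, OF U(1) that e1(1)] pd_local[where i=i, OF U(1) that e1(2)] pdin dhi dhj that by auto
    have ev: "eventually (\<lambda>y. y \<in> U) (nhds x)" using U eventually_nhds by blast
    have cc1: "isCont (pd j (pd i hb)) x"
    proof -
      have A: "isCont (\<lambda>y. pd j (pd i h) y \<bullet> b) x" using c1 by (intro continuous_intros)
      have E: "eventually (\<lambda>y. pd j (pd i hb) y = pd j (pd i h) y \<bullet> b) (nhds x)"
        using eventually_mono[OF ev e2(1)] .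
      show ?thesis using isCont_cong[OF E] A by simp
    qed
    have cc2: "isCont (pd i (pd j hb)) x"
    proof -
      have A: "isCont (\<lambda>y. pd i (pd j h) y \<bullet> b) x" using c2 by (intro continuous_intros)
      have E: "eventually (\<lambda>y. pd i (pd j hb) y = pd i (pd j h) y \<bullet> b) (nhds x)"
        using eventually_mono[OF ev e2(2)] .
      show ?thesis using isCont_cong[OF E] A by simp
    qed
    have "pd j (pd i hb) x = pd i (pd j hb) x"
    proof (rule clairaut_real[OF U _ dd(1) dd(2) cc1 cc2])
      fix y assume "y \<in> U"
      then have "h differentiable (at y)" by (rule dh)
      then show "hb differentiable (at y)" unfolding hb_def[abs_def] by (intro differentiable_inner differentiable_const)
    qed
    then show ?thesis using e2[OF U(2)] by simp
  qed
  show ?thesis by (rule euclidean_eqI) (rule comp)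
qed


lemma Qsum:
  assumes "bilinear Q"
  shows "Q (\<Sum>i\<in>A. u i) (\<Sum>j\<in>B. w j) = (\<Sum>i\<in>A. \<Sum>j\<in>B. Q (u i) (w j))"
  using bilinear_sum[OF assms, of u A w B] by (simp add: sum.cartesian_product)

lemma Qscale:
  assumes "bilinear Q"
  shows "Q (c *\<^sub>R u) (d *\<^sub>R w) = c * d * Q u w"
  using bilinear_lmul[OF assms] bilinear_rmul[OF assms] by simp

lemma mat_mult_ent: "(A ** B) $ i $ j = (\<Sum>k\<in>UNIV. A $ i $ k * B $ k $ j)"
  by (simp add: matrix_matrix_mult_def)

lemma mat1_ent: "(mat 1 :: real^'n^'n) $ i $ j = (if i = j then 1 else 0)"
  by (simp add: mat_def)

locale sf =
  fixes Q :: "'v::euclidean_space \<Rightarrow> 'v \<Rightarrow> real" and U :: "(real^3) set" and f :: "real^3 \<Rightarrow> 'v"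
  assumes bil: "bilinear Q" and Qsym: "\<And>a b. Q a b = Q b a"
    and U: "open U" and smooth: "smooth_on U f" and posimm: "positive_immersion_on Q U f"
begin

lemma bb: "bounded_bilinear Q" using bil bilinear_conv_bounded_bilinear by blast

lemma diff0: "y \<in> U \<Longrightarrow> f differentiable (at y)"
proof -
  assume "y \<in> U"
  then have "iter_pd [] f differentiable (at y)" using smooth unfolding smooth_on_def by blast
  then show ?thesis by (simp add: iter_pd_def)
qed
lemma diff1: "y \<in> U \<Longrightarrow> pd i f differentiable (at y)"
proof -
  assume "y \<in> U"
  then have "iter_pd [i] f differentiable (at y)" using smooth unfolding smooth_on_def by blast
  then show ?thesis by (simp add: iter_pd_def)
qed
lemma diff2: "y \<in> U \<Longrightarrow> pd i (pd j f) differentiable (at y)"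
proof -
  assume "y \<in> U"
  then have "iter_pd [i, j] f differentiable (at y)" using smooth unfolding smooth_on_def by blast
  then show ?thesis by (simp add: iter_pd_def)
qed
lemma diff3: "y \<in> U \<Longrightarrow> pd i (pd j (pd k f)) differentiable (at y)"
proof -
  assume "y \<in> U"
  then have "iter_pd [i, j, k] f differentiable (at y)" using smooth unfolding smooth_on_def by blast
  then show ?thesis by (simp add: iter_pd_def)
qed

lemma cont_of_diff: "h differentiable (at y) \<Longrightarrow> isCont h y"
  using differentiable_imp_continuous_within by blast

lemma sym2: "y \<in> U \<Longrightarrow> pd i (pd j f) y = pd j (pd i f) y"
  using clairaut[OF U _ diff0 diff1 diff1 cont_of_diff[OF diff2] cont_of_diff[OF diff2], of y j i]
  by simp

lemma sym3: "y \<in> U \<Longrightarrow> pd i (pd j (pd k f)) y = pd j (pd i (pd k f)) y"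
proof -
  assume y: "y \<in> U"
  show ?thesis
  using clairaut[where i=i and j=j and h="pd k f", OF U y diff1 diff2 diff2 cont_of_diff[OF diff3] cont_of_diff[OF diff3]]
  using y by simp
qed

lemma pdQ:
  assumes "a differentiable (at y)" "b differentiable (at y)"
  shows "pd c (\<lambda>z. Q (a z) (b z)) y = Q (pd c a y) (b y) + Q (a y) (pd c b y)"
proof -
  obtain A B where A: "(a has_derivative A) (at y)" and B: "(b has_derivative B) (at y)"
    using assms unfolding differentiable_def by blast
  have "((\<lambda>z. Q (a z) (b z)) has_derivative (\<lambda>h. Q (a y) (B h) + Q (A h) (b y))) (at y)"
    using bounded_bilinear.FDERIV[OF bb A B] .
  then show ?thesis using pd_hasD[OF A] pd_hasD[OF B] pd_hasD by (metis add.commute)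
qed

lemma diffQ:
  assumes "a differentiable (at y)" "b differentiable (at y)"
  shows "(\<lambda>z. Q (a z) (b z)) differentiable (at y)"
  using assms bounded_bilinear.FDERIV[OF bb] unfolding differentiable_def by blast

abbreviation g where "g y \<equiv> ind_metric Q f y"
abbreviation G where "G y \<equiv> ginv Q f y"

lemma g_ent: "g y $ a $ b = Q (pd a f y) (pd b f y)"
  by (simp add: ind_metric_def)

lemma g_sym: "g y $ a $ b = g y $ b $ a"
  by (simp add: g_ent Qsym)

lemma dg: "y \<in> U \<Longrightarrow> pd c (\<lambda>z. g z $ a $ b) y = Q (pd c (pd a f) y) (pd b f y) + Q (pd a f y) (pd c (pd b f) y)"
  unfolding g_ent using pdQ diff1 by blast

lemma diff_g: "y \<in> U \<Longrightarrow> (\<lambda>z. g z $ a $ b) differentiable (at y)"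
  unfolding g_ent using diffQ diff1 by blast

lemma tangent_Q: "Q (tangent f y v) (tangent f y v) = (\<Sum>i\<in>UNIV. \<Sum>j\<in>UNIV. v $ i * v $ j * g y $ i $ j)"
  unfolding tangent_def Qsum[OF bil] Qscale[OF bil] g_ent by simp

lemma g_inj: "y \<in> U \<Longrightarrow> g y *v v = 0 \<Longrightarrow> v = 0"
proof (rule ccontr)
  assume y: "y \<in> U" and gv: "g y *v v = 0" and v: "v \<noteq> 0"
  have "Q (tangent f y v) (tangent f y v) > 0" using posimm y v unfolding positive_immersion_on_def by blast
  moreover have "Q (tangent f y v) (tangent f y v) = (\<Sum>i\<in>UNIV. v $ i * (g y *v v) $ i)"
    unfolding tangent_Q by (simp add: matrix_vector_mult_def sum_distrib_left ac_simps)
  ultimately show False using gv by simp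
qed

lemma g_invertible: "y \<in> U \<Longrightarrow> invertible (g y)"
proof -
  assume y: "y \<in> U"
  then obtain B where "B ** g y = mat 1" using matrix_left_invertible_ker g_inj by blast
  then show ?thesis unfolding invertible_def using matrix_left_right_inverse by blast
qed

lemma G_inv: "y \<in> U \<Longrightarrow> g y ** G y = mat 1 \<and> G y ** g y = mat 1"
proof -
  assume "y \<in> U"
  then have "\<exists>A'. g y ** A' = mat 1 \<and> A' ** g y = mat 1" using g_invertible unfolding invertible_def by blast
  then show ?thesis unfolding ginv_def matrix_inv_def by (rule someI_ex)
qed

lemma G_sym: "y \<in> U \<Longrightarrow> G y $ a $ b = G y $ b $ a"
proof -
  assume y: "y \<in> U"
  have gt: "transpose (g y) = g y" by (simp add: transpose_def vec_eq_iff g_sym)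
  have "transpose (G y) ** g y = mat 1"
    using arg_cong[OF conjunct1[OF G_inv[OF y]], of transpose] by (simp add: matrix_transpose_mul gt)
  then have "transpose (G y) = G y"
  proof -
    assume L: "transpose (G y) ** g y = mat 1"
    have "transpose (G y) = transpose (G y) ** (g y ** G y)" using G_inv[OF y] by simp
    also have "\<dots> = (transpose (G y) ** g y) ** G y" by (rule matrix_mul_assoc)
    also have "\<dots> = G y" using L by simp
    finally show ?thesis .
  qed
  then have "transpose (G y) $ b $ a = G y $ b $ a" by simp
  then show ?thesis by (simp add: transpose_def)
qed

lemma Gg: "y \<in> U \<Longrightarrow> (\<Sum>l\<in>UNIV. G y $ k $ l * g y $ l $ m) = (if k = m then 1 else 0)"
  using G_inv[of y] mat_mult_ent[of "G y" "g y" k m] mat1_ent[of k m] by simp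

lemma gG: "y \<in> U \<Longrightarrow> (\<Sum>l\<in>UNIV. g y $ k $ l * G y $ l $ m) = (if k = m then 1 else 0)"
  using G_inv[of y] mat_mult_ent[of "g y" "G y" k m] mat1_ent[of k m] by simp

end


lemma gauss_alg:
  fixes G :: "'n::finite \<Rightarrow> 'n \<Rightarrow> real" and C :: "'n \<Rightarrow> 'n \<Rightarrow> 'n \<Rightarrow> real"
    and T P NN :: "'n \<Rightarrow> 'n \<Rightarrow> 'n \<Rightarrow> 'n \<Rightarrow> real"
  defines "Gam \<equiv> \<lambda>l j k. \<Sum>m\<in>UNIV. G l m * C j k m"
  defines "dG \<equiv> \<lambda>c k l. - (\<Sum>a\<in>UNIV. \<Sum>b\<in>UNIV. G k a * (C c a b + C c b a) * G b l)"
  defines "dGam \<equiv> \<lambda>i l j k. \<Sum>m\<in>UNIV. dG i l m * C j k m + G l m * (T i j k m + P i j k m)"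
  assumes T: "\<And>i j k m. T i j k m = T j i k m"
    and P: "\<And>a b k m. P a b k m = (\<Sum>c\<in>UNIV. Gam c b k * C a m c) + NN b k a m"
  shows "dGam i l j k - dGam j l i k + (\<Sum>m\<in>UNIV. Gam l i m * Gam m j k - Gam l j m * Gam m i k)
       = (\<Sum>m\<in>UNIV. G l m * (NN j k i m - NN i k j m))"
proof -
  have half: "dGam i l j k = (\<Sum>m\<in>UNIV. G l m * (T i j k m + NN j k i m)) - (\<Sum>b\<in>UNIV. Gam b j k * Gam l i b)"
    for i j k
  proof -
    have e1: "(\<Sum>m\<in>UNIV. dG i l m * C j k m) =
        - (\<Sum>b\<in>UNIV. Gam b j k * (\<Sum>a\<in>UNIV. G l a * C i a b)) - (\<Sum>b\<in>UNIV. Gam b j k * Gam l i b)"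
    proof -
      have "(\<Sum>m\<in>UNIV. dG i l m * C j k m) = - (\<Sum>m\<in>UNIV. \<Sum>a\<in>UNIV. \<Sum>b\<in>UNIV. G l a * (C i a b + C i b a) * G b m * C j k m)"
        unfolding dG_def by (simp add: sum_distrib_right sum_negf)
      also have "\<dots> = - (\<Sum>a\<in>UNIV. \<Sum>b\<in>UNIV. \<Sum>m\<in>UNIV. G l a * (C i a b + C i b a) * (G b m * C j k m))"
        by (subst sum.swap, subst (2) sum.swap) (simp add: mult.assoc)
      also have "\<dots> = - (\<Sum>a\<in>UNIV. \<Sum>b\<in>UNIV. G l a * (C i a b + C i b a) * Gam b j k)"
        unfolding Gam_def by (simp add: sum_distrib_left)
      also have "\<dots> = - (\<Sum>b\<in>UNIV. Gam b j k * (\<Sum>a\<in>UNIV. G l a * C i a b)) - (\<Sum>b\<in>UNIV. Gam b j k * (\<Sum>a\<in>UNIV. G l a * C i b a))"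
        by (subst sum.swap) (simp add: sum_distrib_left sum.distrib algebra_simps sum_subtractf)
      finally show ?thesis unfolding Gam_def by simp
    qed
    have e2: "(\<Sum>m\<in>UNIV. G l m * P i j k m) = (\<Sum>b\<in>UNIV. Gam b j k * (\<Sum>a\<in>UNIV. G l a * C i a b)) + (\<Sum>m\<in>UNIV. G l m * NN j k i m)"
    proof -
      have "(\<Sum>m\<in>UNIV. G l m * P i j k m) = (\<Sum>m\<in>UNIV. \<Sum>c\<in>UNIV. G l m * Gam c j k * C i m c) + (\<Sum>m\<in>UNIV. G l m * NN j k i m)"
        unfolding P by (simp add: algebra_simps sum.distrib sum_distrib_left)
      also have "(\<Sum>m\<in>UNIV. \<Sum>c\<in>UNIV. G l m * Gam c j k * C i m c) = (\<Sum>b\<in>UNIV. Gam b j k * (\<Sum>a\<in>UNIV. G l a * C i a b))"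
        by (subst sum.swap) (simp add: sum_distrib_left algebra_simps)
      finally show ?thesis .
    qed
    have "dGam i l j k = (\<Sum>m\<in>UNIV. dG i l m * C j k m) + (\<Sum>m\<in>UNIV. G l m * T i j k m) + (\<Sum>m\<in>UNIV. G l m * P i j k m)"
      unfolding dGam_def by (simp add: sum.distrib algebra_simps)
    then show ?thesis using e1 e2 by (simp add: sum.distrib algebra_simps)
  qed
  have TT: "(\<Sum>m\<in>UNIV. G l m * T i j k m) = (\<Sum>m\<in>UNIV. G l m * T j i k m)" using T by simp
  show ?thesis
    unfolding half[of i j k] half[of j i k]
    using TT by (simp add: sum.distrib sum_subtractf algebra_simps)
qed


lemma pd_const: "pd c (\<lambda>y. k) x = 0"
proof -
  have "((\<lambda>y. k) has_derivative (\<lambda>v. 0)) (at x)" by simp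
  from pd_hasD[OF this] show ?thesis by simp
qed

lemma pd_sum:
  assumes "finite A" "\<And>m. m \<in> A \<Longrightarrow> h m differentiable (at x)"
  shows "pd c (\<lambda>y. \<Sum>m\<in>A. h m y) x = (\<Sum>m\<in>A. pd c (h m) x)"
proof -
  have D: "(h m has_derivative frechet_derivative (h m) (at x)) (at x)" if "m \<in> A" for m
    using assms(2)[OF that] frechet_derivative_works by blast
  have "((\<lambda>y. \<Sum>m\<in>A. h m y) has_derivative (\<lambda>v. \<Sum>m\<in>A. frechet_derivative (h m) (at x) v)) (at x)"
    by (rule has_derivative_sum) (rule D)
  then show ?thesis using pd_hasD unfolding pd_def by metis
qed

lemma pd_mult:
  fixes a b :: "real^'n \<Rightarrow> real"
  assumes "a differentiable (at x)" "b differentiable (at x)"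
  shows "pd c (\<lambda>y. a y * b y) x = pd c a x * b x + a x * pd c b x"
proof -
  obtain A B where A: "(a has_derivative A) (at x)" and B: "(b has_derivative B) (at x)"
    using assms unfolding differentiable_def by blast
  have "((\<lambda>y. a y * b y) has_derivative (\<lambda>h. a x * B h + A h * b x)) (at x)"
    using has_derivative_mult[OF A B] .
  then show ?thesis using pd_hasD[OF A] pd_hasD[OF B] pd_hasD by (metis add.commute mult.commute)
qed

lemma pd_add:
  assumes "a differentiable (at x)" "b differentiable (at x)"
  shows "pd c (\<lambda>y. a y + b y) x = pd c a x + pd c b x"
proof -
  obtain A B where A: "(a has_derivative A) (at x)" and B: "(b has_derivative B) (at x)"
    using assms unfolding differentiable_def by blast
  show ?thesis using has_derivative_add[OF A B] pd_hasD[OF A] pd_hasD[OF B] pd_hasD by metis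
qed

lemma pd_diff:
  assumes "a differentiable (at x)" "b differentiable (at x)"
  shows "pd c (\<lambda>y. a y - b y) x = pd c a x - pd c b x"
proof -
  obtain A B where A: "(a has_derivative A) (at x)" and B: "(b has_derivative B) (at x)"
    using assms unfolding differentiable_def by blast
  show ?thesis using has_derivative_diff[OF A B] pd_hasD[OF A] pd_hasD[OF B] pd_hasD by metis
qed

lemma pd_cmult:
  fixes a :: "real^'n \<Rightarrow> real"
  assumes "a differentiable (at x)"
  shows "pd c (\<lambda>y. k * a y) x = k * pd c a x"
  using pd_mult[where c=c and a="\<lambda>y. k", OF differentiable_const assms] pd_const[of c k x] by simp

lemma det3_diff:
  fixes M :: "real^'n \<Rightarrow> real^3^3"
  assumes "\<And>a b. (\<lambda>y. M y $ a $ b) differentiable (at x)"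
  shows "(\<lambda>y. det (M y)) differentiable (at x)"
  unfolding det_3 by (intro differentiable_mult differentiable_add differentiable_diff assms)

context sf begin

lemma G_cramer:
  assumes y: "y \<in> U"
  shows "G y $ k $ l = det (\<chi> a b. if b = k then axis l 1 $ a else g y $ a $ b) / det (g y)"
proof -
  have d: "det (g y) \<noteq> 0" using g_invertible[OF y] invertible_det_nz by blast
  have "g y *v (G y *v axis l 1) = axis l 1"
    using G_inv[OF y] by (simp add: matrix_vector_mul_assoc)
  then have "G y *v axis l 1 = (\<chi> k. det (\<chi> a b. if b = k then axis l 1 $ a else g y $ a $ b) / det (g y))"
    using cramer[OF d] by blast
  then have "(G y *v axis l 1) $ k = det (\<chi> a b. if b = k then axis l 1 $ a else g y $ a $ b) / det (g y)"
    by simp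
  moreover have "(G y *v axis l 1) $ k = G y $ k $ l"
    by (simp add: matrix_vector_mult_def axis_def if_distrib cong: if_cong)
  ultimately show ?thesis by simp
qed

lemma diff_G:
  assumes x: "x \<in> U"
  shows "(\<lambda>y. G y $ k $ l) differentiable (at x)"
proof (rule diff_local[OF U x G_cramer])
  have d: "det (g x) \<noteq> 0" using g_invertible[OF x] invertible_det_nz by blast
  have e: "(\<lambda>y. (\<chi> a b. if b = k then axis l 1 $ a else g y $ a $ b) $ a $ b) differentiable (at x)" for a b
    by (cases "b = k") (simp_all add: diff_g[OF x])
  show "(\<lambda>y. det (\<chi> a b. if b = k then axis l 1 $ a else g y $ a $ b) / det (g y)) differentiable (at x)"
    by (intro differentiable_divide det3_diff e diff_g[OF x] d)
qed simp

end


context sf begin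

lemma dG:
  assumes x: "x \<in> U"
  shows "pd c (\<lambda>y. G y $ k $ l) x = - (\<Sum>a\<in>UNIV. \<Sum>b\<in>UNIV. G x $ k $ a * pd c (\<lambda>y. g y $ a $ b) x * G x $ b $ l)"
proof -
  define dGx where "dGx m = pd c (\<lambda>y. G y $ k $ m) x" for m
  define dgx where "dgx m b = pd c (\<lambda>y. g y $ m $ b) x" for m b
  have S: "(\<Sum>m\<in>UNIV. dGx m * g x $ m $ b) = - (\<Sum>m\<in>UNIV. G x $ k $ m * dgx m b)" for b
  proof -
    have "pd c (\<lambda>y. \<Sum>m\<in>UNIV. G y $ k $ m * g y $ m $ b) x = pd c (\<lambda>y. if k = b then 1 else 0) x"
      by (rule pd_local[OF U x]) (rule Gg)
    also have "\<dots> = 0" by (rule pd_const)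
    finally have z: "pd c (\<lambda>y. \<Sum>m\<in>UNIV. G y $ k $ m * g y $ m $ b) x = 0" .
    have "pd c (\<lambda>y. \<Sum>m\<in>UNIV. G y $ k $ m * g y $ m $ b) x = (\<Sum>m\<in>UNIV. pd c (\<lambda>y. G y $ k $ m * g y $ m $ b) x)"
      by (rule pd_sum) (auto intro!: differentiable_mult diff_G diff_g x)
    also have "\<dots> = (\<Sum>m\<in>UNIV. dGx m * g x $ m $ b + G x $ k $ m * dgx m b)"
      unfolding dGx_def dgx_def by (intro sum.cong refl pd_mult diff_G diff_g x)
    finally show ?thesis using z by (simp add: sum.distrib eq_neg_iff_add_eq_0)
  qed
  have "dGx l = (\<Sum>m\<in>UNIV. dGx m * (\<Sum>b\<in>UNIV. g x $ m $ b * G x $ b $ l))"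
    unfolding gG[OF x] by (simp add: if_distrib mult.commute cong: if_cong)
  also have "\<dots> = (\<Sum>m\<in>UNIV. \<Sum>b\<in>UNIV. dGx m * g x $ m $ b * G x $ b $ l)"
    by (simp add: sum_distrib_left mult.assoc)
  also have "\<dots> = (\<Sum>b\<in>UNIV. \<Sum>m\<in>UNIV. dGx m * g x $ m $ b * G x $ b $ l)"
    by (rule sum.swap)
  also have "\<dots> = (\<Sum>b\<in>UNIV. (\<Sum>m\<in>UNIV. dGx m * g x $ m $ b) * G x $ b $ l)"
    by (simp add: sum_distrib_right)
  also have "\<dots> = (\<Sum>b\<in>UNIV. - (\<Sum>m\<in>UNIV. G x $ k $ m * dgx m b) * G x $ b $ l)"
    using S by simp
  also have "\<dots> = - (\<Sum>a\<in>UNIV. \<Sum>b\<in>UNIV. G x $ k $ a * dgx a b * G x $ b $ l)"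
  proof -
    have "(\<Sum>b\<in>UNIV. - (\<Sum>m\<in>UNIV. G x $ k $ m * dgx m b) * G x $ b $ l)
        = - (\<Sum>b\<in>UNIV. \<Sum>a\<in>UNIV. G x $ k $ a * dgx a b * G x $ b $ l)"
      by (simp add: sum_distrib_right sum_negf)
    also have "\<dots> = - (\<Sum>a\<in>UNIV. \<Sum>b\<in>UNIV. G x $ k $ a * dgx a b * G x $ b $ l)"
      by (subst sum.swap) (rule refl)
    finally show ?thesis .
  qed
  finally show ?thesis unfolding dGx_def dgx_def .
qed

definition C :: "3 \<Rightarrow> 3 \<Rightarrow> 3 \<Rightarrow> real^3 \<Rightarrow> real" where
  "C i j l y = Q (pd i (pd j f) y) (pd l f y)"

lemma chr:
  assumes y: "y \<in> U"
  shows "christoffel Q f k i j y = (\<Sum>l\<in>UNIV. G y $ k $ l * C i j l y)"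
proof -
  have "pd i (\<lambda>y. g y $ j $ l) y + pd j (\<lambda>y. g y $ i $ l) y - pd l (\<lambda>y. g y $ i $ j) y = 2 * C i j l y" for l
    unfolding dg[OF y] C_def using sym2[OF y] Qsym by (simp add: algebra_simps)
  then show ?thesis unfolding christoffel_def ginv_def[symmetric] ind_metric_def[symmetric]
    by (simp add: sum_distrib_left)
qed

lemma diff_C: "y \<in> U \<Longrightarrow> C i j l differentiable (at y)"
  unfolding C_def[abs_def] by (intro diffQ diff1 diff2)

lemma dC: "y \<in> U \<Longrightarrow> pd c (C i j l) y = Q (pd c (pd i (pd j f)) y) (pd l f y) + Q (pd i (pd j f) y) (pd c (pd l f) y)"
  unfolding C_def[abs_def] by (intro pdQ diff1 diff2)

lemma dchr:
  assumes x: "x \<in> U"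
  shows "pd c (\<lambda>y. christoffel Q f k i j y) x =
    (\<Sum>m\<in>UNIV. pd c (\<lambda>y. G y $ k $ m) x * C i j m x + G x $ k $ m * pd c (C i j m) x)"
proof -
  have "pd c (\<lambda>y. christoffel Q f k i j y) x = pd c (\<lambda>y. \<Sum>m\<in>UNIV. G y $ k $ m * C i j m y) x"
    by (rule pd_local[OF U x]) (rule chr)
  also have "\<dots> = (\<Sum>m\<in>UNIV. pd c (\<lambda>y. G y $ k $ m * C i j m y) x)"
    by (rule pd_sum) (auto intro!: differentiable_mult diff_G diff_C x)
  also have "\<dots> = (\<Sum>m\<in>UNIV. pd c (\<lambda>y. G y $ k $ m) x * C i j m x + G x $ k $ m * pd c (C i j m) x)"
    by (intro sum.cong refl pd_mult diff_G diff_C x)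
  finally show ?thesis .
qed

end


lemma ldl_identity:
  fixes Q :: "'v::real_vector \<Rightarrow> 'v \<Rightarrow> real" and G :: "3 \<Rightarrow> 3 \<Rightarrow> real" and M :: "3 \<Rightarrow> 'v"
  assumes bil: "bilinear Q" and Qsym: "\<And>u w. Q u w = Q w u"
    and Gsym: "\<And>i j. G i j = G j i"
    and e: "G 1 1 = a" "G 1 2 = a * p" "G 1 3 = a * r" "G 2 2 = b + a * p * p"
       "G 2 3 = a * p * r + b * s" "G 3 3 = a * r * r + b * s * s + c"
  shows "(\<Sum>i\<in>UNIV. \<Sum>m\<in>UNIV. G i m * Q (M i) (M m))
     = a * Q (M 1 + p *\<^sub>R M 2 + r *\<^sub>R M 3) (M 1 + p *\<^sub>R M 2 + r *\<^sub>R M 3)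
       + b * Q (M 2 + s *\<^sub>R M 3) (M 2 + s *\<^sub>R M 3) + c * Q (M 3) (M 3)"
proof -
  note l = bilinear_ladd[OF bil] bilinear_radd[OF bil] bilinear_lmul[OF bil] bilinear_rmul[OF bil]
  have s21: "Q (M 2) (M 1) = Q (M 1) (M 2)" "Q (M 3) (M 1) = Q (M 1) (M 3)" "Q (M 3) (M 2) = Q (M 2) (M 3)"
    using Qsym by auto
  have g: "G 2 1 = a * p" "G 3 1 = a * r" "G 3 2 = a * p * r + b * s" using Gsym e by metis+
  show ?thesis
    unfolding sum_3 l s21 g e
    by (simp add: algebra_simps)
qed

lemma trace_neg:
  fixes Q :: "'v::real_vector \<Rightarrow> 'v \<Rightarrow> real" and G :: "3 \<Rightarrow> 3 \<Rightarrow> real" and M :: "3 \<Rightarrow> 'v"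
  assumes bil: "bilinear Q" and Qsym: "\<And>u w. Q u w = Q w u"
    and Gsym: "\<And>i j. G i j = G j i"
    and pd: "\<And>v. v \<noteq> 0 \<Longrightarrow> (\<Sum>i\<in>UNIV. \<Sum>m\<in>UNIV. G i m * v $ i * v $ m) > 0"
    and neg: "\<And>c1 c2 c3. Q (c1 *\<^sub>R M 1 + c2 *\<^sub>R M 2 + c3 *\<^sub>R M 3) (c1 *\<^sub>R M 1 + c2 *\<^sub>R M 2 + c3 *\<^sub>R M 3) \<le> 0"
  shows "(\<Sum>i\<in>UNIV. \<Sum>m\<in>UNIV. G i m * Q (M i) (M m)) \<le> 0"
proof -
  have qv: "(\<Sum>i\<in>UNIV. \<Sum>m\<in>UNIV. G i m * v $ i * v $ m) = (\<Sum>i\<in>UNIV. \<Sum>m\<in>UNIV. G i m * ((\<lambda>i. v $ i) i * (\<lambda>i. v $ i) m))" for v :: "real^3"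
    by (simp add: mult.assoc)
  define a where "a = G 1 1"
  have a: "a > 0"
  proof -
    have "(axis 1 1 :: real^3) \<noteq> 0" by (simp add: axis_eq_0_iff)
    from pd[OF this] show ?thesis unfolding a_def sum_3 by (simp add: axis_def)
  qed
  define p where "p = G 1 2 / a"
  define r where "r = G 1 3 / a"
  define b where "b = G 2 2 - a * p * p"
  define s where "s = (G 2 3 - a * p * r) / b"
  define c where "c = G 3 3 - a * r * r - b * s * s"
  have e1: "G 1 1 = a" "G 1 2 = a * p" "G 1 3 = a * r" "G 2 2 = b + a * p * p"
     "G 3 3 = a * r * r + b * s * s + c"
    using a unfolding a_def p_def r_def b_def c_def by auto
  have idr: "(\<Sum>i\<in>UNIV. \<Sum>m\<in>UNIV. G i m * (u i * u m)) =
      a * ((u 1 + p * u 2 + r * u 3) * (u 1 + p * u 2 + r * u 3))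
       + b * ((u 2 + s * u 3) * (u 2 + s * u 3)) + c * (u 3 * u 3)" if "G 2 3 = a * p * r + b * s" for u :: "3 \<Rightarrow> real"
    using ldl_identity[OF bilinear_times _ Gsym e1(1-4) that e1(5), of u] by (simp add: mult.commute)
  have bpos: "b > 0"
  proof -
    define v :: "real^3" where "v = (\<chi> i. if i = 1 then - p else if i = 2 then 1 else 0)"
    have v1: "v $ 1 = - p" "v $ 2 = 1" "v $ 3 = 0" unfolding v_def by simp_all
    have "v \<noteq> 0" using v1 by (metis zero_index zero_neq_one)
    from pd[OF this] have "0 < (\<Sum>i\<in>UNIV. \<Sum>m\<in>UNIV. G i m * v $ i * v $ m)" .
    also have "\<dots> = b" unfolding sum_3 v1 using e1 Gsym[of 2 1] Gsym[of 3 1] Gsym[of 3 2]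
      by (simp add: algebra_simps)
    finally show ?thesis .
  qed
  have e2: "G 2 3 = a * p * r + b * s" using bpos unfolding s_def by simp
  have cpos: "c > 0"
  proof -
    define v :: "real^3" where "v = (\<chi> i. if i = 1 then p * s - r else if i = 2 then - s else 1)"
    have v1: "v $ 1 = p * s - r" "v $ 2 = - s" "v $ 3 = 1" unfolding v_def by simp_all
    have "v \<noteq> 0" using v1 by (metis zero_index zero_neq_one)
    from pd[OF this] have "0 < (\<Sum>i\<in>UNIV. \<Sum>m\<in>UNIV. G i m * v $ i * v $ m)" .
    also have "\<dots> = c" unfolding qv idr[OF e2] v1 by (simp add: algebra_simps)
    finally show ?thesis .
  qed
  have id: "(\<Sum>i\<in>UNIV. \<Sum>m\<in>UNIV. G i m * Q (M i) (M m))
     = a * Q (M 1 + p *\<^sub>R M 2 + r *\<^sub>R M 3) (M 1 + p *\<^sub>R M 2 + r *\<^sub>R M 3)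
       + b * Q (M 2 + s *\<^sub>R M 3) (M 2 + s *\<^sub>R M 3) + c * Q (M 3) (M 3)"
    by (rule ldl_identity[OF bil Qsym Gsym e1(1-4) e2 e1(5)])
  have n1: "Q (M 1 + p *\<^sub>R M 2 + r *\<^sub>R M 3) (M 1 + p *\<^sub>R M 2 + r *\<^sub>R M 3) \<le> 0"
    using neg[of 1 p r] by simp
  have n2: "Q (M 2 + s *\<^sub>R M 3) (M 2 + s *\<^sub>R M 3) \<le> 0"
    using neg[of 0 1 s] by simp
  have n3: "Q (M 3) (M 3) \<le> 0"
    using neg[of 0 0 1] by simp
  show ?thesis unfolding id using a bpos cpos n1 n2 n3
    by (simp add: add_nonpos_nonpos mult_pos_neg mult_nonneg_nonpos less_imp_le)
qed


context sf begin

lemma Qlsum: "Q (\<Sum>i\<in>A. u i) z = (\<Sum>i\<in>A. Q (u i) z)"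
proof -
  have "linear (\<lambda>w. Q w z)" using bil unfolding bilinear_def by blast
  then show ?thesis using linear_sum[of "\<lambda>w. Q w z"] by (simp add: o_def)
qed

lemma Qrsum: "Q z (\<Sum>i\<in>A. u i) = (\<Sum>i\<in>A. Q z (u i))"
  using Qlsum Qsym by simp

lemma Qlscale: "Q (c *\<^sub>R u) w = c * Q u w" using bilinear_lmul[OF bil] by simp
lemma Qrscale: "Q u (c *\<^sub>R w) = c * Q u w" using bilinear_rmul[OF bil] by simp
lemma Qladd: "Q (u + v) w = Q u w + Q v w" using bilinear_ladd[OF bil] by simp
lemma Qradd: "Q w (u + v) = Q w u + Q w v" using bilinear_radd[OF bil] by simp
lemma Qlsub: "Q (u - v) w = Q u w - Q v w" using bilinear_lsub[OF bil] by simp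

definition N where "N x a b = normal_part Q f x (pd a (pd b f) x)"
definition Gam where "Gam x c a b = (\<Sum>l\<in>UNIV. G x $ c $ l * C a b l x)"

lemma N_orth:
  assumes x: "x \<in> U"
  shows "Q (N x a b) (pd d f x) = 0"
proof -
  define w where "w = pd a (pd b f) x"
  have "Q (N x a b) (pd d f x) = Q w (pd d f x) -
      (\<Sum>k\<in>UNIV. \<Sum>l\<in>UNIV. G x $ k $ l * Q w (pd l f x) * g x $ k $ d)"
    unfolding N_def normal_part_def w_def[symmetric] ginv_def[symmetric] Qlsub Qlsum Qlscale g_ent by simp
  also have "(\<Sum>k\<in>UNIV. \<Sum>l\<in>UNIV. G x $ k $ l * Q w (pd l f x) * g x $ k $ d)
      = (\<Sum>l\<in>UNIV. Q w (pd l f x) * (\<Sum>k\<in>UNIV. g x $ d $ k * G x $ k $ l))"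
    by (subst sum.swap) (simp add: sum_distrib_left g_sym[of x d] ac_simps)
  also have "\<dots> = Q w (pd d f x)"
    unfolding gG[OF x] by (simp add: if_distrib cong: if_cong)
  finally show ?thesis by simp
qed

lemma decomp:
  "pd a (pd b f) x = (\<Sum>c\<in>UNIV. Gam x c a b *\<^sub>R pd c f x) + N x a b"
  unfolding N_def normal_part_def Gam_def ginv_def[symmetric] C_def scaleR_sum_left[symmetric]
  by simp

lemma P_decomp:
  assumes x: "x \<in> U"
  shows "Q (pd b (pd k f) x) (pd a (pd m f) x) = (\<Sum>c\<in>UNIV. Gam x c b k * C a m c x) + Q (N x b k) (N x a m)"
proof -
  have "Q (pd b (pd k f) x) (pd a (pd m f) x) = (\<Sum>c\<in>UNIV. Gam x c b k * Q (pd c f x) (pd a (pd m f) x)) + Q (N x b k) (pd a (pd m f) x)"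
    by (subst decomp[of b k]) (simp add: Qladd Qlsum Qlscale)
  also have "Q (N x b k) (pd a (pd m f) x) = Q (N x b k) (N x a m)"
    by (subst decomp[of a m]) (simp add: Qradd Qrsum Qrscale N_orth[OF x])
  finally show ?thesis by (simp add: C_def Qsym)
qed

lemma riem:
  assumes x: "x \<in> U"
  shows "riemann Q f l i j k x = (\<Sum>m\<in>UNIV. G x $ l $ m * (Q (N x j k) (N x i m) - Q (N x i k) (N x j m)))"
proof -
  have chrx: "christoffel Q f a b c x = (\<Sum>m\<in>UNIV. G x $ a $ m * C b c m x)" for a b c
    by (rule chr[OF x])
  have dgC: "pd c (\<lambda>y. g y $ a $ b) x = C c a b x + C c b a x" for a b c
    unfolding dg[OF x] C_def using Qsym by simp
  have dchrx: "pd i (\<lambda>y. christoffel Q f l j k y) x =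
      (\<Sum>m\<in>UNIV. (- (\<Sum>a\<in>UNIV. \<Sum>b\<in>UNIV. G x $ l $ a * (C i a b x + C i b a x) * G x $ b $ m)) * C j k m x
         + G x $ l $ m * (Q (pd i (pd j (pd k f)) x) (pd m f x) + Q (pd j (pd k f) x) (pd i (pd m f) x)))"
    for i l j k
    unfolding dchr[OF x] dG[OF x] dgC dC[OF x] C_def ..
  note key = gauss_alg[where G="\<lambda>a b. G x $ a $ b" and C="\<lambda>a b c. C a b c x"
      and T="\<lambda>i j k m. Q (pd i (pd j (pd k f)) x) (pd m f x)" and P="\<lambda>i j k m. Q (pd j (pd k f) x) (pd i (pd m f) x)"
      and NN="\<lambda>b k a m. Q (N x b k) (N x a m)" and i=i and l=l and j=j and k=k]
  have T: "Q (pd i (pd j (pd k f)) x) (pd m f x) = Q (pd j (pd i (pd k f)) x) (pd m f x)" for i j k m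
    using sym3[OF x] by simp
  have P: "Q (pd b (pd k f) x) (pd a (pd m f) x) = (\<Sum>c\<in>UNIV. (\<Sum>m\<in>UNIV. G x $ c $ m * C b k m x) * C a m c x) + Q (N x b k) (N x a m)" for a b k m
    using P_decomp[OF x] unfolding Gam_def .
  show ?thesis
    unfolding riemann_def dchrx chrx using key[OF T P] by simp
qed

end


context sf begin

lemma mean_N: "mean_curv Q f x = (\<Sum>i\<in>UNIV. \<Sum>m\<in>UNIV. G x $ i $ m *\<^sub>R N x i m)"
  unfolding mean_curv_def N_def ginv_def ..

lemma ric:
  assumes x: "x \<in> U" and H: "mean_curv Q f x = 0"
  shows "ricci Q f j k x = - (\<Sum>i\<in>UNIV. \<Sum>m\<in>UNIV. G x $ i $ m * Q (N x i k) (N x j m))"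
proof -
  have z: "(\<Sum>i\<in>UNIV. \<Sum>m\<in>UNIV. G x $ i $ m * Q (N x j k) (N x i m)) = 0"
  proof -
    have "(\<Sum>i\<in>UNIV. \<Sum>m\<in>UNIV. G x $ i $ m * Q (N x j k) (N x i m)) = Q (N x j k) (mean_curv Q f x)"
      unfolding mean_N Qrsum Qrscale ..
    also have "\<dots> = 0" using H bilinear_rzero[OF bil] by simp
    finally show ?thesis .
  qed
  have "ricci Q f j k x = (\<Sum>i\<in>UNIV. \<Sum>m\<in>UNIV. G x $ i $ m * Q (N x j k) (N x i m))
      - (\<Sum>i\<in>UNIV. \<Sum>m\<in>UNIV. G x $ i $ m * Q (N x i k) (N x j m))"
    unfolding ricci_def riem[OF x] by (simp add: right_diff_distrib sum_subtractf)
  then show ?thesis using z by simp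
qed

lemma N_sym: "x \<in> U \<Longrightarrow> N x a b = N x b a"
  unfolding N_def using sym2 by simp

lemma G_pd:
  assumes x: "x \<in> U" and v: "v \<noteq> 0"
  shows "(\<Sum>i\<in>UNIV. \<Sum>m\<in>UNIV. G x $ i $ m * v $ i * v $ m) > 0"
proof -
  define u where "u = G x *v v"
  have gu: "g x *v u = v" unfolding u_def using G_inv[OF x] by (simp add: matrix_vector_mul_assoc)
  have u0: "u \<noteq> 0" using gu v by auto
  have "Q (tangent f x u) (tangent f x u) > 0" using posimm x u0 unfolding positive_immersion_on_def by blast
  also have "Q (tangent f x u) (tangent f x u) = (\<Sum>i\<in>UNIV. u $ i * (g x *v u) $ i)"
    unfolding tangent_Q by (simp add: matrix_vector_mult_def sum_distrib_left ac_simps)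
  also have "\<dots> = (\<Sum>i\<in>UNIV. v $ i * u $ i)" unfolding gu by (simp add: mult.commute)
  also have "\<dots> = (\<Sum>i\<in>UNIV. \<Sum>m\<in>UNIV. G x $ i $ m * v $ i * v $ m)"
    unfolding u_def by (simp add: matrix_vector_mult_def sum_distrib_left ac_simps)
  finally show ?thesis .
qed

lemma neg_normal:
  assumes x: "x \<in> U"
    and maxpos: "\<And>S. subspace S \<Longrightarrow> pos_def_on Q S \<Longrightarrow> dim S \<le> 3"
    and orth: "\<And>d. Q w (pd d f x) = 0"
  shows "Q w w \<le> 0"
proof (rule ccontr)
  assume "\<not> Q w w \<le> 0"
  then have wpos: "Q w w > 0" by simp
  define L :: "(real^3) \<times> real \<Rightarrow> 'v" where "L p = tangent f x (fst p) + snd p *\<^sub>R w" for p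
  have lin: "linear L"
    unfolding L_def[abs_def] tangent_def
    by (auto intro!: linearI simp: sum.distrib scaleR_add_left algebra_simps scaleR_sum_right)
  have tw: "Q (tangent f x a) w = 0" for a
    unfolding tangent_def Qlsum Qlscale using orth Qsym by simp
  have QL: "Q (L p) (L p) = Q (tangent f x (fst p)) (tangent f x (fst p)) + snd p * snd p * Q w w" for p
    unfolding L_def Qladd Qradd Qlscale Qrscale tw using tw Qsym by simp
  have QLpos: "Q (L p) (L p) > 0" if "p \<noteq> 0" for p
  proof (cases "fst p = 0")
    case True
    then have "snd p \<noteq> 0" using that by (simp add: prod_eq_iff)
    then have "snd p * snd p > 0" by (simp add: zero_less_mult_iff linorder_neq_iff disj_commute)
    then have "snd p * snd p * Q w w > 0" using wpos by (rule mult_pos_pos)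
    moreover have "Q (tangent f x (fst p)) (tangent f x (fst p)) = 0" using True unfolding tangent_def by (simp add: bilinear_lzero[OF bil])
    ultimately show ?thesis unfolding QL by simp
  next
    case False
    then have "Q (tangent f x (fst p)) (tangent f x (fst p)) > 0"
      using posimm x unfolding positive_immersion_on_def by blast
    moreover have "snd p * snd p * Q w w \<ge> 0" using wpos by simp
    ultimately show ?thesis unfolding QL by simp
  qed
  have inj: "inj_on L (span UNIV)"
  proof -
    have "L p = 0 \<Longrightarrow> p = 0" for p using QLpos[of p] bilinear_lzero[OF bil] by fastforce
    then have "inj L" using linear_injective_0[OF lin] by blast
    then show ?thesis by (simp add: inj_on_def inj_def)
  qed
  have sub: "subspace (range L)" using linear_subspace_image[OF lin subspace_UNIV] .
  have pos: "pos_def_on Q (range L)"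
    unfolding pos_def_on_def
  proof (intro ballI impI)
    fix z assume "z \<in> range L" "z \<noteq> 0"
    then obtain p where p: "z = L p" by blast
    have "p \<noteq> 0" using \<open>z \<noteq> 0\<close> p linear_0[OF lin] by auto
    then show "Q z z > 0" using QLpos p by simp
  qed
  have "dim (range L) = dim (UNIV :: ((real^3) \<times> real) set)"
    using dim_image_eq[OF lin inj] .
  also have "\<dots> = 4" by simp
  finally have "dim (range L) = 4" .
  then show False using maxpos[OF sub pos] by simp
qed

end


lemma sum4_reorder:
  "(\<Sum>a\<in>A. \<Sum>b\<in>B. \<Sum>c\<in>C. \<Sum>d\<in>D. F a b c d) = (\<Sum>c\<in>C. \<Sum>d\<in>D. \<Sum>b\<in>B. \<Sum>a\<in>A. F a b c d)"
proof -
  have "(\<Sum>a\<in>A. \<Sum>b\<in>B. \<Sum>c\<in>C. \<Sum>d\<in>D. F a b c d) = (\<Sum>a\<in>A. \<Sum>c\<in>C. \<Sum>b\<in>B. \<Sum>d\<in>D. F a b c d)"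
    by (intro sum.cong refl) (rule sum.swap)
  also have "\<dots> = (\<Sum>a\<in>A. \<Sum>c\<in>C. \<Sum>d\<in>D. \<Sum>b\<in>B. F a b c d)"
    by (intro sum.cong refl) (rule sum.swap)
  also have "\<dots> = (\<Sum>c\<in>C. \<Sum>a\<in>A. \<Sum>d\<in>D. \<Sum>b\<in>B. F a b c d)"
    by (rule sum.swap)
  also have "\<dots> = (\<Sum>c\<in>C. \<Sum>d\<in>D. \<Sum>a\<in>A. \<Sum>b\<in>B. F a b c d)"
    by (intro sum.cong refl) (rule sum.swap)
  also have "\<dots> = (\<Sum>c\<in>C. \<Sum>d\<in>D. \<Sum>b\<in>B. \<Sum>a\<in>A. F a b c d)"
    by (intro sum.cong refl) (rule sum.swap)
  finally show ?thesis .
qed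

theorem corollary1:
  fixes Q :: "'v::euclidean_space \<Rightarrow> 'v \<Rightarrow> real"
    and q :: nat
    and U :: "(real^3) set"
    and f :: "real^3 \<Rightarrow> 'v"
  assumes "signature_form Q 3 q"
    and "open U"
    and "smooth_on U f"
    and "positive_immersion_on Q U f"
    and "maximal_on Q U f"
  shows "nonneg_ricci_on Q U f"
proof -
  have bil: "bilinear Q" and Qsym: "\<And>a b. Q a b = Q b a"
    and maxpos: "\<And>S. subspace S \<Longrightarrow> pos_def_on Q S \<Longrightarrow> dim S \<le> 3"
    using assms(1) unfolding signature_form_def by auto
  interpret sf Q U f using bil Qsym assms(2-4) by unfold_locales
  show ?thesis unfolding nonneg_ricci_on_def
  proof (intro ballI allI)
    fix x v assume x: "x \<in> U"
    have H: "mean_curv Q f x = 0" using assms(5) x unfolding maximal_on_def by blast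
    define M where "M i = (\<Sum>k\<in>UNIV. v $ k *\<^sub>R N x i k)" for i
    have QM': "G x $ i $ m * Q (M i) (M m) = (\<Sum>j\<in>UNIV. \<Sum>k\<in>UNIV. G x $ i $ m * Q (N x i k) (N x j m) * v $ j * v $ k)" for i m
      unfolding M_def Qlsum Qrsum Qlscale Qrscale using N_sym[OF x, of m]
      by (simp add: sum_distrib_left ac_simps)
    have QM: "G x $ i $ m * Q (M i) (M m) = (\<Sum>k\<in>UNIV. \<Sum>j\<in>UNIV. G x $ i $ m * Q (N x i k) (N x j m) * v $ j * v $ k)" for i m
      unfolding QM' by (rule sum.swap)
    have "(\<Sum>j\<in>UNIV. \<Sum>k\<in>UNIV. ricci Q f j k x * v $ j * v $ k)
        = - (\<Sum>j\<in>UNIV. \<Sum>k\<in>UNIV. \<Sum>i\<in>UNIV. \<Sum>m\<in>UNIV. G x $ i $ m * Q (N x i k) (N x j m) * v $ j * v $ k)"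
      unfolding ric[OF x H] by (simp add: sum_distrib_right sum_negf)
    also have "\<dots> = - (\<Sum>i\<in>UNIV. \<Sum>m\<in>UNIV. \<Sum>k\<in>UNIV. \<Sum>j\<in>UNIV. G x $ i $ m * Q (N x i k) (N x j m) * v $ j * v $ k)"
      by (subst sum4_reorder) (rule refl)
    also have "\<dots> = - (\<Sum>i\<in>UNIV. \<Sum>m\<in>UNIV. G x $ i $ m * Q (M i) (M m))"
      unfolding QM ..
    finally have eq: "(\<Sum>j\<in>UNIV. \<Sum>k\<in>UNIV. ricci Q f j k x * v $ j * v $ k) = - (\<Sum>i\<in>UNIV. \<Sum>m\<in>UNIV. G x $ i $ m * Q (M i) (M m))" .
    have orthM: "Q (c1 *\<^sub>R M 1 + c2 *\<^sub>R M 2 + c3 *\<^sub>R M 3) (pd d f x) = 0" for c1 c2 c3 d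
      unfolding M_def Qladd Qlscale Qlsum N_orth[OF x] by simp
    have neg: "Q (c1 *\<^sub>R M 1 + c2 *\<^sub>R M 2 + c3 *\<^sub>R M 3) (c1 *\<^sub>R M 1 + c2 *\<^sub>R M 2 + c3 *\<^sub>R M 3) \<le> 0" for c1 c2 c3
      by (rule neg_normal[OF x maxpos orthM])
    have "(\<Sum>i\<in>UNIV. \<Sum>m\<in>UNIV. G x $ i $ m * Q (M i) (M m)) \<le> 0"
      by (rule trace_neg[where G="\<lambda>i m. G x $ i $ m", OF bil Qsym G_sym[OF x] G_pd[OF x] neg])
    then show "0 \<le> (\<Sum>j\<in>UNIV. \<Sum>k\<in>UNIV. ricci Q f j k x * v $ j * v $ k)" unfolding eq by simp
  qed
qed


end
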